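(* Let $G=(V,E)$ be a simple cubic bipartite graph that has no potential 4-cycles, and let $F_1$ and $F_2$ be 2-factors of $G$ such that for every cycle $C$ of $(V,F_1)$ there exists a cycle $D$ of $(V,F_2)$ with $|V(D)|\ge 10$ and $|V(C)\cap V(D)|\ge 4$. Then $(V,F_1)$ or $(V,F_2)$ has at most $|V|/8$ connected components.
   Context: A 2-factor of a graph $G=(V,E)$ is a set $F\subseteq E$ such that every node of $V$ is incident to exactly two edges of $F$; the components of $(V,F)$ are simple cycles, and for such a cycle $C$, $V(C)$ denotes its node set and its size is $|V(C)|$. A set $S$ of 4 nodes is a potential 4-cycle if some 2-factor $F$ of $G$ has a cycle in $(V,F)$ with node set exactly $S$. A graph is cubic if every node has degree exactly 3. *)

theory Defs
  imports Main
begin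

definition simple_graph :: "'a set \<Rightarrow> 'a set set \<Rightarrow> bool" where
  "simple_graph V E \<longleftrightarrow> finite V \<and> (\<forall>e\<in>E. e \<subseteq> V \<and> card e = 2)"

definition degree :: "'a set set \<Rightarrow> 'a \<Rightarrow> nat" where
  "degree E v = card {e\<in>E. v \<in> e}"

definition cubic :: "'a set \<Rightarrow> 'a set set \<Rightarrow> bool" where
  "cubic V E \<longleftrightarrow> (\<forall>v\<in>V. degree E v = 3)"

definition bipartite :: "'a set \<Rightarrow> 'a set set \<Rightarrow> bool" where
  "bipartite V E \<longleftrightarrow> (\<exists>A\<subseteq>V. \<forall>e\<in>E. card (e \<inter> A) = 1)"

definition two_factor :: "'a set \<Rightarrow> 'a set set \<Rightarrow> 'a set set \<Rightarrow> bool" where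
  "two_factor V E F \<longleftrightarrow> F \<subseteq> E \<and> (\<forall>v\<in>V. card {e\<in>F. v \<in> e} = 2)"

definition adj_rel :: "'a set \<Rightarrow> 'a set set \<Rightarrow> ('a \<times> 'a) set" where
  "adj_rel V F = {(u,v). u \<in> V \<and> v \<in> V \<and> {u,v} \<in> F}"

definition components :: "'a set \<Rightarrow> 'a set set \<Rightarrow> 'a set set" where
  "components V F = {(adj_rel V F)\<^sup>* `` {v} | v. v \<in> V}"

text \<open>Node sets of the cycles of (V,F) for a 2-factor F: these are the components.\<close>
abbreviation cycle_node_sets :: "'a set \<Rightarrow> 'a set set \<Rightarrow> 'a set set" where
  "cycle_node_sets V F \<equiv> components V F"

definition potential_4_cycle :: "'a set \<Rightarrow> 'a set set \<Rightarrow> 'a set \<Rightarrow> bool" where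
  "potential_4_cycle V E S \<longleftrightarrow> card S = 4 \<and>
     (\<exists>F. two_factor V E F \<and> S \<in> cycle_node_sets V F)"

end

theory Submission
  imports Defs
begin

lemma adj_sym: "sym (adj_rel V F)"
  unfolding adj_rel_def sym_def by (auto simp: insert_commute)

lemma rt_in_V: "(v,x) \<in> (adj_rel V F)\<^sup>* \<Longrightarrow> v \<in> V \<Longrightarrow> x \<in> V"
  by (induction rule: rtrancl_induct) (auto simp: adj_rel_def)

lemma comp_subset: "D \<in> components V F \<Longrightarrow> D \<subseteq> V"
  unfolding components_def using rt_in_V by fastforce

lemma comp_eq:
  assumes "C \<in> components V F" "D \<in> components V F" "x \<in> C" "x \<in> D"
  shows "C = D"
proof -
  let ?R = "adj_rel V F"
  obtain v where v: "C = ?R\<^sup>* `` {v}" using assms(1) unfolding components_def by auto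
  obtain w where w: "D = ?R\<^sup>* `` {w}" using assms(2) unfolding components_def by auto
  have s: "sym (?R\<^sup>*)" using adj_sym sym_rtrancl by blast
  have "(v,x) \<in> ?R\<^sup>*" "(w,x) \<in> ?R\<^sup>*" using assms v w by auto
  then have vw: "(v,w) \<in> ?R\<^sup>*" "(w,v) \<in> ?R\<^sup>*" using s
    by (meson rtrancl_trans symD)+
  show ?thesis unfolding v w using vw by (auto intro: rtrancl_trans)
qed

lemma comp_Union: "\<Union> (components V F) = V"
proof
  show "\<Union> (components V F) \<subseteq> V" using comp_subset by blast
  show "V \<subseteq> \<Union> (components V F)" unfolding components_def by blast
qed

lemma comp_finite: "finite V \<Longrightarrow> finite (components V F)"
proof -
  assume "finite V"
  have "components V F = (\<lambda>v. (adj_rel V F)\<^sup>* `` {v}) ` V"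
    unfolding components_def by auto
  then show ?thesis using \<open>finite V\<close> by simp
qed

lemma sum_ind: "finite S \<Longrightarrow> (\<Sum>e\<in>S. if P e then 1 else 0) = card {e\<in>S. P e}"
  by (simp add: sum.If_cases Int_def)

lemma card2_eq:
  assumes "finite e" "card e = 2" "x \<in> e" "y \<in> e" "x \<noteq> y"
  shows "e = {x,y}"
proof -
  have "{x,y} \<subseteq> e" using assms by auto
  moreover have "card {x,y} = 2" using assms by auto
  ultimately show ?thesis using assms card_seteq[of e "{x,y}"] by simp
qed

lemma edge_in_comp:
  assumes sg: "simple_graph V E" and tf: "two_factor V E F"
    and D: "D \<in> components V F" and x: "x \<in> D" and e: "e \<in> F" "x \<in> e"
  shows "e \<subseteq> D"
proof
  fix y assume y: "y \<in> e"
  have eE: "e \<in> E" using tf e unfolding two_factor_def by auto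
  have ev: "e \<subseteq> V" "card e = 2" using sg eE unfolding simple_graph_def by auto
  have fe: "finite e" using ev(2) by (intro card_ge_0_finite) simp
  show "y \<in> D"
  proof (cases "y = x")
    case True then show ?thesis using x by simp
  next
    case False
    have "e = {x,y}" using card2_eq[OF fe ev(2) e(2) y] False by auto
    then have "(x,y) \<in> adj_rel V F" using e ev x y comp_subset[OF D]
      unfolding adj_rel_def by auto
    moreover obtain v where v: "D = (adj_rel V F)\<^sup>* `` {v}"
      using D unfolding components_def by auto
    ultimately show ?thesis using x by (auto intro: rtrancl_into_rtrancl)
  qed
qed

lemma double_count:
  assumes sg: "simple_graph V E" and tf: "two_factor V E F"
    and D: "D \<in> components V F" and X: "\<forall>e\<in>E. card (e \<inter> X) = 1"
  shows "2 * card (D \<inter> X) = card {e\<in>F. e \<subseteq> D}"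
proof -
  let ?FD = "{e\<in>F. e \<subseteq> D}"
  have DV: "D \<subseteq> V" using comp_subset[OF D] .
  have fV: "finite V" using sg unfolding simple_graph_def by auto
  have fD: "finite D" using DV fV finite_subset by blast
  have fFD: "finite ?FD"
    by (rule finite_subset[of _ "Pow D"]) (use fD in auto)
  have fDX: "finite (D \<inter> X)" using fD by auto
  have "2 * card (D \<inter> X) = (\<Sum>x\<in>D \<inter> X. card {e\<in>F. x \<in> e})"
    using tf DV unfolding two_factor_def by (simp add: subset_iff)
  also have "\<dots> = (\<Sum>x\<in>D \<inter> X. card {e\<in>?FD. x \<in> e})"
  proof (rule sum.cong)
    fix x assume "x \<in> D \<inter> X"
    then have "{e\<in>F. x \<in> e} = {e\<in>?FD. x \<in> e}"
      using edge_in_comp[OF sg tf D] by auto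
    then show "card {e\<in>F. x \<in> e} = card {e\<in>?FD. x \<in> e}" by simp
  qed simp
  also have "\<dots> = (\<Sum>x\<in>D \<inter> X. \<Sum>e\<in>?FD. if x \<in> e then 1 else 0)"
    by (rule sum.cong) (use sum_ind[OF fFD] in \<open>simp_all\<close>)
  also have "\<dots> = (\<Sum>e\<in>?FD. \<Sum>x\<in>D \<inter> X. if x \<in> e then 1 else 0)"
    by (rule sum.swap)
  also have "\<dots> = (\<Sum>e\<in>?FD. card (e \<inter> X))"
  proof (rule sum.cong)
    fix e assume e: "e \<in> ?FD"
    have "(\<Sum>x\<in>D \<inter> X. if x \<in> e then 1 else 0) = card (D \<inter> X \<inter> e)"
      using fDX by (simp add: sum.If_cases Int_commute)
    also have "D \<inter> X \<inter> e = e \<inter> X" using e by auto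
    finally show "(\<Sum>x\<in>D \<inter> X. if x \<in> e then 1 else 0) = card (e \<inter> X)" .
  qed simp
  also have "\<dots> = (\<Sum>e\<in>?FD. 1)"
    by (rule sum.cong) (use X tf in \<open>auto simp: two_factor_def\<close>)
  also have "\<dots> = card ?FD" by simp
  finally show ?thesis .
qed

lemma comp_card_ge6:
  assumes sg: "simple_graph V E" and bp: "bipartite V E"
    and np: "\<not> (\<exists>S. potential_4_cycle V E S)"
    and tf: "two_factor V E F" and D: "D \<in> components V F"
  shows "card D \<ge> 6"
proof -
  have DV: "D \<subseteq> V" using comp_subset[OF D] .
  have fV: "finite V" using sg unfolding simple_graph_def by auto
  have fD: "finite D" using DV fV finite_subset by blast
  obtain v where v: "v \<in> V" "D = (adj_rel V F)\<^sup>* `` {v}"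
    using D unfolding components_def by auto
  have vD: "v \<in> D" using v by auto
  have ge3: "card D \<ge> 3"
  proof (rule ccontr)
    assume "\<not> 3 \<le> card D"
    then have le: "card D \<le> 2" by simp
    have "{e\<in>F. v \<in> e} \<subseteq> {D}"
    proof
      fix e assume e: "e \<in> {e\<in>F. v \<in> e}"
      have "e \<subseteq> D" using edge_in_comp[OF sg tf D vD] e by auto
      moreover have "card e = 2" using e tf sg
        unfolding two_factor_def simple_graph_def by auto
      ultimately have "e = D" using fD le card_seteq by metis
      then show "e \<in> {D}" by simp
    qed
    then have "card {e\<in>F. v \<in> e} \<le> 1"
      by (metis card.empty card.insert empty_iff finite.intros(1) card_mono finite.emptyI finite_insert insert_absorb is_singletonI is_singleton_altdef le_numeral_extra(4))
    moreover have "card {e\<in>F. v \<in> e} = 2" using tf v unfolding two_factor_def by auto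
    ultimately show False by simp
  qed
  obtain A where A: "A \<subseteq> V" "\<forall>e\<in>E. card (e \<inter> A) = 1"
    using bp unfolding bipartite_def by auto
  have B: "\<forall>e\<in>E. card (e \<inter> (V - A)) = 1"
  proof
    fix e assume e: "e \<in> E"
    have ev: "e \<subseteq> V" "card e = 2" using sg e unfolding simple_graph_def by auto
    have fe: "finite e" using ev(2) by (intro card_ge_0_finite) simp
    have "e \<inter> (V - A) = e - (e \<inter> A)" using ev by auto
    then have "card (e \<inter> (V - A)) = card e - card (e \<inter> A)"
      using fe by (simp add: card_Diff_subset)
    then show "card (e \<inter> (V - A)) = 1" using ev A e by simp
  qed
  have c1: "2 * card (D \<inter> A) = card {e\<in>F. e \<subseteq> D}"
    using double_count[OF sg tf D A(2)] .
  have c2: "2 * card (D \<inter> (V - A)) = card {e\<in>F. e \<subseteq> D}"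
    using double_count[OF sg tf D B] .
  have "D \<inter> (V - A) = D - A" using DV by auto
  moreover have "card D = card (D \<inter> A) + card (D - A)"
    using fD by (metis card_Int_Diff)  
  ultimately have ev: "card D = 2 * card (D \<inter> A)" using c1 c2 by simp
  have n4: "card D \<noteq> 4" using np tf D unfolding potential_4_cycle_def by auto
  show ?thesis using ge3 ev n4 by presburger
qed

lemma comp_disjoint: "C \<in> components V F \<Longrightarrow> D \<in> components V F \<Longrightarrow> C \<noteq> D \<Longrightarrow> C \<inter> D = {}"
  using comp_eq[of C V F D] by auto

theorem lemma2:
  fixes V :: "'a set" and E F1 F2 :: "'a set set"
  assumes "simple_graph V E" and "cubic V E" and "bipartite V E"
    and "\<not> (\<exists>S. potential_4_cycle V E S)"
    and "two_factor V E F1" and "two_factor V E F2"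
    and "\<forall>C\<in>cycle_node_sets V F1. \<exists>D\<in>cycle_node_sets V F2.
           card D \<ge> 10 \<and> card (C \<inter> D) \<ge> 4"
  shows "8 * card (components V F1) \<le> card V
       \<or> 8 * card (components V F2) \<le> card V"
proof -
  let ?C1 = "components V F1" and ?C2 = "components V F2"
  have fV: "finite V" using assms(1) unfolding simple_graph_def by auto
  have fC1: "finite ?C1" and fC2: "finite ?C2" using comp_finite[OF fV] by auto
  have fin1: "\<And>C. C \<in> ?C1 \<Longrightarrow> finite C" by (rule finite_subset[OF comp_subset fV])
  have fin2: "\<And>C. C \<in> ?C2 \<Longrightarrow> finite C" by (rule finite_subset[OF comp_subset fV])
  obtain g where g: "\<forall>C\<in>?C1. g C \<in> ?C2 \<and> card (g C) \<ge> 10 \<and> card (C \<inter> g C) \<ge> 4"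
  proof -
    have "\<forall>C\<in>?C1. \<exists>D. D \<in> ?C2 \<and> card D \<ge> 10 \<and> card (C \<inter> D) \<ge> 4"
      using assms(7) by blast
    from bchoice[OF this] show ?thesis using that by blast
  qed
  define fib where "fib D = {C\<in>?C1. g C = D}" for D
  have k1: "card ?C1 = (\<Sum>D\<in>?C2. card (fib D))"
  proof -
    have "?C1 = (\<Union>D\<in>?C2. fib D)" using g unfolding fib_def by auto
    moreover have "card (\<Union>D\<in>?C2. fib D) = (\<Sum>D\<in>?C2. card (fib D))"
      by (rule card_UN_disjoint) (use fC1 fC2 in \<open>auto simp: fib_def\<close>)
    ultimately show ?thesis by simp
  qed
  have fibb: "4 * card (fib D) \<le> card D \<and> (fib D \<noteq> {} \<longrightarrow> card D \<ge> 10)"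
    if D: "D \<in> ?C2" for D
  proof
    have ff: "finite (fib D)" using fC1 unfolding fib_def by auto
    have "card (fib D) * 4 \<le> (\<Sum>C\<in>fib D. card (C \<inter> D))"
      using sum_bounded_below[of "fib D" 4 "\<lambda>C. card (C \<inter> D)"] g
      by (auto simp: fib_def)
    also have "\<dots> = card (\<Union>C\<in>fib D. C \<inter> D)"
      by (rule card_UN_disjoint[symmetric])
        (use ff fin2[OF D] comp_disjoint[of _ V F1] in \<open>simp_all add: fib_def, blast\<close>)
    also have "\<dots> \<le> card D"
      by (rule card_mono) (use fin2[OF D] in auto)
    finally show "4 * card (fib D) \<le> card D" by simp
    show "fib D \<noteq> {} \<longrightarrow> card D \<ge> 10" using g unfolding fib_def by auto
  qed
  have per: "8 * card (fib D) + 24 \<le> 4 * card D" if D: "D \<in> ?C2" for D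
  proof -
    have a: "card D \<ge> 6" using comp_card_ge6[OF assms(1,3,4,6) D] .
    show ?thesis
    proof (cases "fib D = {}")
      case True then show ?thesis using a by simp
    next
      case False
      then have "card D \<ge> 10" "4 * card (fib D) \<le> card D" using fibb[OF D] by auto
      then show ?thesis by presburger
    qed
  qed
  have nV: "card V = (\<Sum>D\<in>?C2. card D)"
  proof -
    have "card (\<Union> ?C2) = (\<Sum>D\<in>?C2. card D)"
      by (rule card_Union_disjoint) (use fin2 comp_disjoint[of _ V F2] in \<open>auto simp: pairwise_def disjnt_def\<close>)
    then show ?thesis using comp_Union by metis
  qed
  have "(\<Sum>D\<in>?C2. 8 * card (fib D) + 24) \<le> (\<Sum>D\<in>?C2. 4 * card D)"
    by (rule sum_mono) (use per in auto)
  then have "8 * card ?C1 + 24 * card ?C2 \<le> 4 * card V"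
    by (simp add: k1 nV sum.distrib sum_distrib_left sum_distrib_right mult.commute)
  then show ?thesis by linarith
qed

end
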